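(* Consider full-batch Noisy-SGD ($\mathcal{B}_t=\mathcal{B}_t'=[n]$) on adjacent datasets $\mathcal{D},\mathcal{D}'$ with iterates $W_t,W_t'$ and $W_0=W_0'$. Assume $\nabla\ell_i,\nabla\ell_i'$ are $(L,\lambda)$-Hölder continuous on $\mathcal{K}$ for all $i\in[n]$, with $L\ge0$, $\lambda\in(0,1]$. Let $g(x;M)=x+Mx^\lambda$. Then for all $t\ge0$, $$W_\infty(W_t,W_t')\le\min(D_t,D),\qquad D_t=\min\big(g(D_{t-1};\eta L)+2\eta K/n,\ D_{t-1}+2\eta K\big),\quad D_0=0.$$
   Context: Setting (Noisy-SGD). Let $\mathcal{K}\subset\mathbb{R}^d$ be a nonempty closed convex set of diameter $D$, $\Pi_{\mathcal{K}}$ the Euclidean projection. Let $\ell(\cdot;d)$, $d\in\mathcal{X}$, be differentiable losses on $\mathcal{K}$; for $\mathcal{D}=(d_1,\dots,d_n)$ write $\ell_i=\ell(\cdot;d_i)$, and $\ell_i'=\ell(\cdot;d_i')$ for $\mathcal{D}'$. $\Pi_{B_K}(v)=v\min(1,K/\|v\|)$. Noisy-SGD: $W_{t+1}=\Pi_{\mathcal{K}}\big[W_t-\eta\frac1b\sum_{i\in\mathcal{B}_t}\Pi_{B_K}[\nabla\ell_i(W_t)]+G_t\big]$, $G_t$ i.i.d. $N(0,\sigma^2I_d)$; $W_t'$ analogously on $\mathcal{D}'$. Adjacent datasets differ in exactly one index. $(L,\lambda)$-Hölder: $\|f(w)-f(w')\|\le L\|w-w'\|^\lambda$. $W_\infty(\mu,\nu)=\inf_{\gamma\in\Gamma(\mu,\nu)}\operatorname{ess\,sup}_{(X,Y)\sim\gamma}\|X-Y\|$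 over couplings, applied to the laws of $W_t,W_t'$. *)

theory Defs
  imports "HOL-Analysis.Analysis" "HOL-Probability.Probability"
begin

definition clip :: "real \<Rightarrow> 'a::real_normed_vector \<Rightarrow> 'a" where
  "clip Kc v = min 1 (Kc / norm v) *\<^sub>R v"

text \<open>Isotropic Gaussian N(0, sigma^2 I_d) on a Euclidean space: independent
  N(0,sigma^2) coordinates with respect to the orthonormal basis.\<close>
definition gauss :: "real \<Rightarrow> 'a::euclidean_space measure" where
  "gauss \<sigma> = distr (PiM Basis (\<lambda>_. density lborel (normal_density 0 \<sigma>))) borel
                   (\<lambda>x. \<Sum>b\<in>Basis. x b *\<^sub>R b)"

definition sgd_step :: "'a::euclidean_space set \<Rightarrow> ('x \<Rightarrow> 'a \<Rightarrow> 'a) \<Rightarrow> nat \<Rightarrow> (nat \<Rightarrow> 'x)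
    \<Rightarrow> real \<Rightarrow> real \<Rightarrow> 'a \<Rightarrow> 'a \<Rightarrow> 'a" where
  "sgd_step K grad n data \<eta> Kc w g =
     closest_point K (w - \<eta> *\<^sub>R ((1 / real n) *\<^sub>R (\<Sum>i<n. clip Kc (grad (data i) w))) + g)"

text \<open>Iterates as functions of the noise sequence omega (omega t = G_t).\<close>
primrec sgd_iter :: "'a::euclidean_space set \<Rightarrow> ('x \<Rightarrow> 'a \<Rightarrow> 'a) \<Rightarrow> nat \<Rightarrow> (nat \<Rightarrow> 'x)
    \<Rightarrow> real \<Rightarrow> real \<Rightarrow> 'a \<Rightarrow> nat \<Rightarrow> (nat \<Rightarrow> 'a) \<Rightarrow> 'a" where
  "sgd_iter K grad n data \<eta> Kc w0 0 \<omega> = w0"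
| "sgd_iter K grad n data \<eta> Kc w0 (Suc t) \<omega> =
     sgd_step K grad n data \<eta> Kc (sgd_iter K grad n data \<eta> Kc w0 t \<omega>) (\<omega> t)"

definition sgd_law :: "'a::euclidean_space set \<Rightarrow> ('x \<Rightarrow> 'a \<Rightarrow> 'a) \<Rightarrow> nat \<Rightarrow> (nat \<Rightarrow> 'x)
    \<Rightarrow> real \<Rightarrow> real \<Rightarrow> real \<Rightarrow> 'a \<Rightarrow> nat \<Rightarrow> 'a measure" where
  "sgd_law K grad n data \<eta> Kc \<sigma> w0 t =
     distr (PiM UNIV (\<lambda>_::nat. gauss \<sigma>)) borel (sgd_iter K grad n data \<eta> Kc w0 t)"

definition couplings :: "'a::euclidean_space measure \<Rightarrow> 'a measure \<Rightarrow> ('a \<times> 'a) measure set" where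
  "couplings \<mu> \<nu> = {\<gamma>. prob_space \<gamma> \<and> sets \<gamma> = sets (borel \<Otimes>\<^sub>M borel)
                      \<and> distr \<gamma> borel fst = \<mu> \<and> distr \<gamma> borel snd = \<nu>}"

definition W_inf :: "'a::euclidean_space measure \<Rightarrow> 'a measure \<Rightarrow> ereal" where
  "W_inf \<mu> \<nu> = (INF \<gamma>\<in>couplings \<mu> \<nu>. esssup \<gamma> (\<lambda>p. ereal (norm (fst p - snd p))))"

definition hoelder_on :: "'a::real_normed_vector set \<Rightarrow> real \<Rightarrow> real \<Rightarrow> ('a \<Rightarrow> 'b::real_normed_vector) \<Rightarrow> bool" where
  "hoelder_on S L \<alpha> f \<longleftrightarrow> (\<forall>w\<in>S. \<forall>w'\<in>S. norm (f w - f w') \<le> L * norm (w - w') powr \<alpha>)"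

definition gfun :: "real \<Rightarrow> real \<Rightarrow> real \<Rightarrow> real" where
  "gfun \<alpha> x M = x + M * x powr \<alpha>"

primrec Dseq :: "real \<Rightarrow> real \<Rightarrow> real \<Rightarrow> real \<Rightarrow> nat \<Rightarrow> nat \<Rightarrow> real" where
  "Dseq \<eta> L \<alpha> Kc n 0 = 0"
| "Dseq \<eta> L \<alpha> Kc n (Suc t) =
     min (gfun \<alpha> (Dseq \<eta> L \<alpha> Kc n t) (\<eta> * L) + 2 * \<eta> * Kc / real n)
         (Dseq \<eta> L \<alpha> Kc n t + 2 * \<eta> * Kc)"

end

theory Submission
  imports Defs
begin

lemma clip_eq_cp:
  fixes v :: "'a::euclidean_space"
  assumes "Kc \<ge> 0"
  shows "clip Kc v = closest_point (cball 0 Kc) v"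
proof (rule closest_point_unique)
  show "convex (cball (0::'a) Kc)" "closed (cball (0::'a) Kc)" by auto
  show "clip Kc v \<in> cball 0 Kc"
  proof (cases "norm v \<le> Kc")
    case True
    have "norm (clip Kc v) \<le> norm v" unfolding clip_def using assms
      by (auto simp: abs_if min_def mult_le_cancel_right1 divide_le_eq)
    then show ?thesis using True by simp
  next
    case False
    then have "norm v > 0" using assms by auto
    with False have "clip Kc v = (Kc / norm v) *\<^sub>R v" unfolding clip_def by (auto simp: min_def field_simps)
    then show ?thesis using \<open>norm v > 0\<close> assms by simp
  qed
  show "\<forall>z\<in>cball 0 Kc. dist v (clip Kc v) \<le> dist v z"
  proof (cases "norm v \<le> Kc")
    case True
    then have "clip Kc v = v" unfolding clip_def using assms
      by (cases "v = 0") (auto simp: min_def field_simps)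
    then show ?thesis by simp
  next
    case False
    then have nv: "norm v > 0" using assms by auto
    with False have c: "clip Kc v = (Kc / norm v) *\<^sub>R v" unfolding clip_def by (auto simp: min_def field_simps)
    have "v - (Kc / norm v) *\<^sub>R v = (1 - Kc / norm v) *\<^sub>R v" by (simp add: algebra_simps)
    moreover have "norm ((1 - Kc / norm v) *\<^sub>R v) = norm v - Kc"
    proof -
      have "0 \<le> 1 - Kc / norm v" using nv False by (simp add: field_simps)
      then have "norm ((1 - Kc / norm v) *\<^sub>R v) = (1 - Kc / norm v) * norm v" by simp
      also have "\<dots> = norm v - Kc" using nv by (simp add: field_simps)
      finally show ?thesis .
    qed
    ultimately have "dist v (clip Kc v) = norm v - Kc" by (simp add: c dist_norm)
    moreover have "norm v - Kc \<le> dist v z" if "z \<in> cball 0 Kc" for z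
      using that norm_triangle_ineq2[of v z] by (simp add: dist_norm)
    ultimately show ?thesis by auto
  qed
qed

lemma clip_lip:
  fixes v w :: "'a::euclidean_space"
  assumes "Kc \<ge> 0"
  shows "norm (clip Kc v - clip Kc w) \<le> norm (v - w)"
  using closest_point_lipschitz[of "cball (0::'a) Kc" v w] assms
  by (simp add: clip_eq_cp dist_norm)

lemma clip_norm:
  fixes v :: "'a::euclidean_space"
  assumes "Kc \<ge> 0"
  shows "norm (clip Kc v) \<le> Kc"
  using closest_point_in_set[of "cball (0::'a) Kc" v] assms by (simp add: clip_eq_cp)

lemma clip_cont:
  assumes "Kc \<ge> 0"
  shows "continuous_on UNIV (clip Kc :: 'a::euclidean_space \<Rightarrow> 'a)"
  using continuous_on_closest_point[of "cball (0::'a) Kc" UNIV] assms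
  by (simp add: clip_eq_cp[OF assms, abs_def])

lemma gauss_prob: "\<sigma> > 0 \<Longrightarrow> prob_space (gauss \<sigma> :: 'a::euclidean_space measure)"
  unfolding gauss_def
  apply (rule prob_space.prob_space_distr)
   apply (rule prob_space_PiM, rule prob_space_normal_density, simp)
  apply (intro borel_measurable_sum borel_measurable_scaleR measurable_component_singleton borel_measurable_const)
  by auto

lemma step_bound:
  fixes K :: "'a::euclidean_space set" and grad :: "'x \<Rightarrow> 'a \<Rightarrow> 'a"
  assumes Kp: "K \<noteq> {}" "closed K" "convex K"
    and Kc: "Kc \<ge> 0" and eta: "\<eta> \<ge> 0" and n: "n \<ge> 1" and L: "L \<ge> 0"
    and j: "j < n" and same: "\<forall>i<n. i \<noteq> j \<longrightarrow> data i = data' i"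
    and hoelder: "\<And>i. i < n \<Longrightarrow> hoelder_on K L \<alpha> (grad (data i))"
    and ww: "w = w' \<or> (w \<in> K \<and> w' \<in> K)"
  shows "norm (sgd_step K grad n data \<eta> Kc w g - sgd_step K grad n data' \<eta> Kc w' g)
     \<le> min (gfun \<alpha> (norm (w - w')) (\<eta> * L) + 2 * \<eta> * Kc / real n) (norm (w - w') + 2 * \<eta> * Kc)"
proof -
  define d where "d = norm (w - w')"
  define e where "e i = norm (clip Kc (grad (data i) w) - clip Kc (grad (data' i) w'))" for i
  define S where "S = (\<Sum>i<n. clip Kc (grad (data i) w))"
  define S' where "S' = (\<Sum>i<n. clip Kc (grad (data' i) w'))"
  have dn: "d \<ge> 0" by (simp add: d_def)
  have np: "real n > 0" using n by simp
  have "norm (sgd_step K grad n data \<eta> Kc w g - sgd_step K grad n data' \<eta> Kc w' g)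
      \<le> norm ((w - \<eta> *\<^sub>R ((1 / real n) *\<^sub>R S) + g) - (w' - \<eta> *\<^sub>R ((1 / real n) *\<^sub>R S') + g))"
    using closest_point_lipschitz[OF Kp(3) Kp(2) Kp(1),
      of "w - \<eta> *\<^sub>R ((1 / real n) *\<^sub>R S) + g" "w' - \<eta> *\<^sub>R ((1 / real n) *\<^sub>R S') + g"]
    unfolding sgd_step_def S_def S'_def by (simp only: dist_norm)
  also have "(w - \<eta> *\<^sub>R ((1 / real n) *\<^sub>R S) + g) - (w' - \<eta> *\<^sub>R ((1 / real n) *\<^sub>R S') + g)
      = (w - w') - (\<eta> / real n) *\<^sub>R (S - S')" by (simp add: algebra_simps)
  also have "norm \<dots> \<le> d + (\<eta> / real n) * norm (S - S')"
    using norm_triangle_ineq4[of "w - w'" "(\<eta> / real n) *\<^sub>R (S - S')"] eta np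
    by (simp add: d_def)
  finally have A: "norm (sgd_step K grad n data \<eta> Kc w g - sgd_step K grad n data' \<eta> Kc w' g)
      \<le> d + (\<eta> / real n) * norm (S - S')" .
  have SS: "norm (S - S') \<le> (\<Sum>i<n. e i)"
    unfolding S_def S'_def e_def sum_subtractf[symmetric] by (rule norm_sum)
  have e2: "e i \<le> 2 * Kc" for i
    using norm_triangle_ineq4[of "clip Kc (grad (data i) w)" "clip Kc (grad (data' i) w')"]
      clip_norm[OF Kc, of "grad (data i) w"] clip_norm[OF Kc, of "grad (data' i) w'"]
    unfolding e_def by linarith
  have eL: "e i \<le> (if i = j then 2 * Kc else 0) + L * d powr \<alpha>" if "i < n" for i
  proof (cases "i = j")
    case True
    have "0 \<le> L * d powr \<alpha>" using L by simp
    then show ?thesis using e2[of i] True by simp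
  next
    case False
    then have di: "data' i = data i" using same that by simp
    have "e i \<le> L * d powr \<alpha>"
      using ww
    proof
      assume "w = w'" then show ?thesis using L by (simp add: e_def di)
    next
      assume "w \<in> K \<and> w' \<in> K"
      then have "norm (grad (data i) w - grad (data i) w') \<le> L * d powr \<alpha>"
        using hoelder[OF that] unfolding hoelder_on_def d_def by blast
      then show ?thesis using clip_lip[OF Kc, of "grad (data i) w" "grad (data i) w'"]
        unfolding e_def di by linarith
    qed
    then show ?thesis using False by simp
  qed
  have "(\<Sum>i<n. e i) \<le> (\<Sum>i<n. (if i = j then 2 * Kc else 0) + L * d powr \<alpha>)"
    by (rule sum_mono) (use eL in auto)
  also have "\<dots> = 2 * Kc + real n * (L * d powr \<alpha>)"
    using j by (simp add: sum.distrib)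
  finally have B1: "(\<Sum>i<n. e i) \<le> 2 * Kc + real n * (L * d powr \<alpha>)" .
  have B2: "(\<Sum>i<n. e i) \<le> real n * (2 * Kc)"
    using sum_mono[of "{..<n}" e "\<lambda>_. 2 * Kc"] e2 by simp
  have etan: "\<eta> / real n \<ge> 0" using eta np by simp
  have "(\<eta> / real n) * norm (S - S') \<le> (\<eta> / real n) * (2 * Kc + real n * (L * d powr \<alpha>))"
    using SS B1 etan by (meson mult_left_mono order_trans)
  also have "\<dots> = \<eta> * L * d powr \<alpha> + 2 * \<eta> * Kc / real n" using np by (simp add: field_simps)
  finally have C1: "(\<eta> / real n) * norm (S - S') \<le> \<eta> * L * d powr \<alpha> + 2 * \<eta> * Kc / real n" .
  have "(\<eta> / real n) * norm (S - S') \<le> (\<eta> / real n) * (real n * (2 * Kc))"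
    using SS B2 etan by (meson mult_left_mono order_trans)
  also have "\<dots> = 2 * \<eta> * Kc" using np by (simp add: field_simps)
  finally have C2: "(\<eta> / real n) * norm (S - S') \<le> 2 * \<eta> * Kc" .
  show ?thesis using A C1 C2 unfolding gfun_def d_def[symmetric] by simp
qed

lemma gfun_mono:
  assumes "0 \<le> x" "x \<le> y" "M \<ge> 0" "\<alpha> > 0"
  shows "gfun \<alpha> x M \<le> gfun \<alpha> y M"
  unfolding gfun_def using powr_mono2[of \<alpha> x y] assms
  by (simp add: add_mono mult_left_mono)

lemma hoelder_cont:
  fixes f :: "'a::real_normed_vector \<Rightarrow> 'b::real_normed_vector"
  assumes h: "hoelder_on K L \<alpha> f" and a: "\<alpha> > 0"
  shows "continuous_on K f"
  unfolding continuous_on_def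
proof (intro ballI)
  fix x assume x: "x \<in> K"
  have "((\<lambda>y. f y - f x) \<longlongrightarrow> 0) (at x within K)"
  proof (rule Lim_null_comparison)
    show "\<forall>\<^sub>F y in at x within K. norm (f y - f x) \<le> L * norm (y - x) powr \<alpha>"
      using h x unfolding hoelder_on_def by (auto simp: eventually_at_filter)
    have "((\<lambda>y. norm (y - x) powr \<alpha>) \<longlongrightarrow> 0) (at x within K)"
      by (rule tendsto_zero_powrI) (auto intro!: tendsto_eq_intros a)
    then show "((\<lambda>y. L * norm (y - x) powr \<alpha>) \<longlongrightarrow> 0) (at x within K)"
      using tendsto_mult_left[of _ 0 _ L] by fastforce
  qed
  then show "(f \<longlongrightarrow> f x) (at x within K)"
    using Lim_transform[of "\<lambda>y. f x" "f x" _ f] by (simp add: LIM_zero_iff tendsto_const)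
qed

lemma iter_meas:
  fixes K :: "'a::euclidean_space set" and grad :: "'x \<Rightarrow> 'a \<Rightarrow> 'a"
  assumes Kp: "K \<noteq> {}" "closed K" "convex K" and Kc: "Kc \<ge> 0"
    and cont: "\<And>i. i < n \<Longrightarrow> continuous_on K (grad (data i))"
    and Ms: "\<And>i. sets (M i) = sets borel"
  shows "sgd_iter K grad n data \<eta> Kc w0 t \<in> borel_measurable (PiM UNIV M)
     \<and> (t \<ge> 1 \<longrightarrow> (\<forall>\<omega>. sgd_iter K grad n data \<eta> Kc w0 t \<omega> \<in> K))"
proof (induction t)
  case 0 then show ?case by simp
next
  case (Suc t)
  let ?W = "sgd_iter K grad n data \<eta> Kc w0 t"
  have comp: "(\<lambda>\<omega>. \<omega> t) \<in> borel_measurable (PiM UNIV M)"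
  proof -
    have "(\<lambda>\<omega>. \<omega> t) \<in> PiM UNIV M \<rightarrow>\<^sub>M M t" by (rule measurable_component_singleton) simp
    moreover have "PiM UNIV M \<rightarrow>\<^sub>M M t = borel_measurable (PiM UNIV M)"
      by (rule measurable_cong_sets[OF refl Ms])
    ultimately show ?thesis by simp
  qed
  have cpc: "continuous_on UNIV (closest_point K)"
    using continuous_on_closest_point[OF Kp(3,2,1)] by simp
  define A where "A w = w - \<eta> *\<^sub>R ((1 / real n) *\<^sub>R (\<Sum>i<n. clip Kc (grad (data i) (closest_point K w))))" for w
  have Ac: "continuous_on UNIV A"
    unfolding A_def
  proof (intro continuous_on_diff continuous_on_id continuous_on_scaleR continuous_on_const continuous_on_sum)
    fix i assume "i \<in> {..<n}"
    then have "continuous_on UNIV (\<lambda>w. grad (data i) (closest_point K w))"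
      using continuous_on_compose2[OF cont cpc] closest_point_in_set[OF Kp(2,1)] by auto
    then show "continuous_on UNIV (\<lambda>w. clip Kc (grad (data i) (closest_point K w)))"
      using continuous_on_compose2[OF clip_cont[OF Kc]] by blast
  qed
  have meas: "sgd_iter K grad n data \<eta> Kc w0 (Suc t) \<in> borel_measurable (PiM UNIV M)"
  proof (cases t)
    case 0
    have "sgd_iter K grad n data \<eta> Kc w0 (Suc t) = (\<lambda>\<omega>. closest_point K
       ((w0 - \<eta> *\<^sub>R ((1 / real n) *\<^sub>R (\<Sum>i<n. clip Kc (grad (data i) w0)))) + \<omega> t))"
      using 0 by (auto simp: sgd_step_def)
    then show ?thesis
      by (simp only:) (intro borel_measurable_continuous_on[OF cpc] borel_measurable_add comp borel_measurable_const)
  next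
    case (Suc m)
    then have "?W \<omega> \<in> K" for \<omega> using Suc.IH by auto
    then have "sgd_iter K grad n data \<eta> Kc w0 (Suc t) = (\<lambda>\<omega>. closest_point K (A (?W \<omega>) + \<omega> t))"
      by (auto simp: sgd_step_def A_def closest_point_self)
    then show ?thesis using Suc.IH
      by (simp only:) (intro borel_measurable_continuous_on[OF cpc] borel_measurable_add comp
            borel_measurable_continuous_on[OF Ac], auto)
  qed
  moreover have "\<forall>\<omega>. sgd_iter K grad n data \<eta> Kc w0 (Suc t) \<omega> \<in> K"
    by (simp add: sgd_step_def closest_point_in_set[OF Kp(2,1)])
  ultimately show ?case by blast
qed

lemma iter_bound:
  fixes K :: "'a::euclidean_space set" and grad :: "'x \<Rightarrow> 'a \<Rightarrow> 'a"
  assumes Kp: "K \<noteq> {}" "closed K" "convex K"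
    and Kc: "Kc \<ge> 0" and eta: "\<eta> \<ge> 0" and n: "n \<ge> 1" and L: "L \<ge> 0" and a: "\<alpha> > 0"
    and j: "j < n" and same: "\<forall>i<n. i \<noteq> j \<longrightarrow> data i = data' i"
    and hoelder: "\<And>i. i < n \<Longrightarrow> hoelder_on K L \<alpha> (grad (data i))"
  shows "norm (sgd_iter K grad n data \<eta> Kc w0 t \<omega> - sgd_iter K grad n data' \<eta> Kc w0 t \<omega>)
      \<le> Dseq \<eta> L \<alpha> Kc n t
    \<and> (t \<ge> 1 \<longrightarrow> sgd_iter K grad n data \<eta> Kc w0 t \<omega> \<in> K \<and> sgd_iter K grad n data' \<eta> Kc w0 t \<omega> \<in> K)"
proof (induction t)
  case 0 then show ?case by simp
next
  case (Suc t)
  let ?w = "sgd_iter K grad n data \<eta> Kc w0 t \<omega>"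
  let ?w' = "sgd_iter K grad n data' \<eta> Kc w0 t \<omega>"
  have ww: "?w = ?w' \<or> (?w \<in> K \<and> ?w' \<in> K)"
    using Suc.IH by (cases t) auto
  have d: "norm (?w - ?w') \<le> Dseq \<eta> L \<alpha> Kc n t" using Suc.IH by simp
  have "norm (sgd_step K grad n data \<eta> Kc ?w (\<omega> t) - sgd_step K grad n data' \<eta> Kc ?w' (\<omega> t))
     \<le> min (gfun \<alpha> (norm (?w - ?w')) (\<eta> * L) + 2 * \<eta> * Kc / real n) (norm (?w - ?w') + 2 * \<eta> * Kc)"
    by (rule step_bound[where K=K and grad=grad and data=data and data'=data' and \<alpha>=\<alpha> and j=j])
       (use Kp Kc eta n L j same hoelder ww in auto)
  also have "\<dots> \<le> Dseq \<eta> L \<alpha> Kc n (Suc t)"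
  proof -
    have "gfun \<alpha> (norm (?w - ?w')) (\<eta> * L) \<le> gfun \<alpha> (Dseq \<eta> L \<alpha> Kc n t) (\<eta> * L)"
      using gfun_mono[OF norm_ge_zero d _ a, of "\<eta> * L"] eta L by simp
    then show ?thesis using d by (auto simp: min_def)
  qed
  finally show ?case
    by (simp add: sgd_step_def closest_point_in_set[OF Kp(2,1)])
qed

theorem mainTheorem10:
  fixes K :: "'a::euclidean_space set" and D :: real
    and loss :: "'a \<Rightarrow> 'x \<Rightarrow> real" and grad :: "'x \<Rightarrow> 'a \<Rightarrow> 'a"
    and n :: nat and data data' :: "nat \<Rightarrow> 'x"
    and \<eta> Kc \<sigma> L \<alpha> :: real and w0 :: 'a and t :: nat
  assumes K_ne: "K \<noteq> {}" and K_closed: "closed K" and K_convex: "convex K"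
    and K_bdd: "bounded K" and D_def: "D = diameter K"
    and grad_loss: "\<And>x w. w \<in> K \<Longrightarrow>
        ((\<lambda>v. loss v x) has_derivative (\<lambda>h. grad x w \<bullet> h)) (at w within K)"
    and n_pos: "n \<ge> 1"
    and adjacent: "\<exists>j<n. data j \<noteq> data' j \<and> (\<forall>i<n. i \<noteq> j \<longrightarrow> data i = data' i)"
    and hoelder: "\<And>i. i < n \<Longrightarrow> hoelder_on K L \<alpha> (grad (data i))"
    and hoelder': "\<And>i. i < n \<Longrightarrow> hoelder_on K L \<alpha> (grad (data' i))"
    and L_nonneg: "L \<ge> 0" and lam: "0 < \<alpha>" "\<alpha> \<le> 1"
    and eta_nonneg: "\<eta> \<ge> 0" and Kc_nonneg: "Kc \<ge> 0" and sigma_pos: "\<sigma> > 0"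
  shows "W_inf (sgd_law K grad n data \<eta> Kc \<sigma> w0 t) (sgd_law K grad n data' \<eta> Kc \<sigma> w0 t)
           \<le> ereal (min (Dseq \<eta> L \<alpha> Kc n t) D)"
proof -
  obtain j where j: "j < n" and same: "\<forall>i<n. i \<noteq> j \<longrightarrow> data i = data' i"
    using adjacent by blast
  define P where "P = PiM UNIV (\<lambda>_::nat. gauss \<sigma> :: 'a measure)"
  define W where "W = sgd_iter K grad n data \<eta> Kc w0 t"
  define W' where "W' = sgd_iter K grad n data' \<eta> Kc w0 t"
  have Ms: "sets (gauss \<sigma> :: 'a measure) = sets borel" by (simp add: gauss_def)
  have probP: "prob_space P" unfolding P_def
    by (rule prob_space_PiM) (rule gauss_prob[OF sigma_pos])
  have Wm: "W \<in> borel_measurable P"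
    using iter_meas[OF K_ne K_closed K_convex Kc_nonneg, where grad=grad and n=n and data=data and M="\<lambda>_. gauss \<sigma>"]
      hoelder_cont[OF hoelder lam(1)] Ms unfolding W_def P_def by blast
  have W'm: "W' \<in> borel_measurable P"
    using iter_meas[OF K_ne K_closed K_convex Kc_nonneg, where grad=grad and n=n and data=data' and M="\<lambda>_. gauss \<sigma>"]
      hoelder_cont[OF hoelder' lam(1)] Ms unfolding W'_def P_def by blast
  define c where "c = min (Dseq \<eta> L \<alpha> Kc n t) D"
  have bnd: "norm (W \<omega> - W' \<omega>) \<le> c" for \<omega>
  proof -
    have ib: "norm (W \<omega> - W' \<omega>) \<le> Dseq \<eta> L \<alpha> Kc n t \<and> (t \<ge> 1 \<longrightarrow> W \<omega> \<in> K \<and> W' \<omega> \<in> K)"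
      unfolding W_def W'_def
      by (rule iter_bound[where grad=grad and data=data and data'=data' and K=K and j=j])
        (use K_ne K_closed K_convex Kc_nonneg eta_nonneg n_pos L_nonneg lam(1) j same hoelder in auto)
    have "norm (W \<omega> - W' \<omega>) \<le> D"
    proof (cases t)
      case 0
      obtain k where "k \<in> K" using K_ne by blast
      then have "0 \<le> D" using diameter_bounded_bound[OF K_bdd, of k k] D_def by simp
      then show ?thesis using 0 by (simp add: W_def W'_def)
    next
      case (Suc m)
      then show ?thesis using ib diameter_bounded_bound[OF K_bdd, of "W \<omega>" "W' \<omega>"] D_def
        by (simp add: dist_norm)
    qed
    then show ?thesis using ib by (simp add: c_def)
  qed
  define \<gamma> where "\<gamma> = distr P (borel \<Otimes>\<^sub>M borel) (\<lambda>\<omega>. (W \<omega>, W' \<omega>))"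
  have pm: "(\<lambda>\<omega>. (W \<omega>, W' \<omega>)) \<in> P \<rightarrow>\<^sub>M (borel \<Otimes>\<^sub>M borel)"
    using Wm W'm by (rule measurable_Pair)
  have law: "sgd_law K grad n data \<eta> Kc \<sigma> w0 t = distr P borel W"
    "sgd_law K grad n data' \<eta> Kc \<sigma> w0 t = distr P borel W'"
    by (simp_all add: sgd_law_def P_def W_def W'_def)
  have cpl: "\<gamma> \<in> couplings (sgd_law K grad n data \<eta> Kc \<sigma> w0 t) (sgd_law K grad n data' \<eta> Kc \<sigma> w0 t)"
    unfolding couplings_def law
  proof (intro CollectI conjI)
    show "prob_space \<gamma>" unfolding \<gamma>_def by (rule prob_space.prob_space_distr[OF probP pm])
    show "sets \<gamma> = sets (borel \<Otimes>\<^sub>M borel)" by (simp add: \<gamma>_def)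
    show "distr \<gamma> borel fst = distr P borel W"
      unfolding \<gamma>_def by (subst distr_distr[OF measurable_fst pm]) (simp add: comp_def)
    show "distr \<gamma> borel snd = distr P borel W'"
      unfolding \<gamma>_def by (subst distr_distr[OF measurable_snd pm]) (simp add: comp_def)
  qed
  have fm: "(\<lambda>p. ereal (norm (fst p - snd p))) \<in> borel_measurable (borel \<Otimes>\<^sub>M borel :: ('a \<times> 'a) measure)"
  proof -
    have "(\<lambda>p. fst p - snd p) \<in> borel_measurable (borel \<Otimes>\<^sub>M borel :: ('a \<times> 'a) measure)"
      by (intro borel_measurable_diff measurable_fst'' measurable_snd'') auto
    then show ?thesis by measurable
  qed
  have "esssup \<gamma> (\<lambda>p. ereal (norm (fst p - snd p))) \<le> ereal c"
  proof (rule esssup_I)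
    show "(\<lambda>p. ereal (norm (fst p - snd p))) \<in> borel_measurable \<gamma>"
      using fm by (simp add: \<gamma>_def)
    have "AE p in \<gamma>. ereal (norm (fst p - snd p)) \<le> ereal c"
      unfolding \<gamma>_def
    proof (subst AE_distr_iff[OF pm])
      show "{x :: 'a \<times> 'a. x \<in> space (borel \<Otimes>\<^sub>M borel) \<and> ereal (norm (fst x - snd x)) \<le> ereal c} \<in> sets (borel \<Otimes>\<^sub>M borel)"
        by (rule borel_measurable_le[OF fm borel_measurable_const])
      show "AE x in P. ereal (norm (fst (W x, W' x) - snd (W x, W' x))) \<le> ereal c"
        using bnd by simp
    qed
    then show "AE p in \<gamma>. ereal (norm (fst p - snd p)) \<le> ereal c" .
  qed
  then have "W_inf (sgd_law K grad n data \<eta> Kc \<sigma> w0 t) (sgd_law K grad n data' \<eta> Kc \<sigma> w0 t) \<le> ereal c"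
    unfolding W_inf_def using cpl by (meson INF_lower order_trans)
  then show ?thesis by (simp add: c_def)
qed

end
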